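(* For all $m,n\in\mathbf{N}_0$, $$ \left[{n+m+1}\atop{m+1}\right]_q=\sum_{j=0}^{n}q^{(m+1)j}\left[{n+m-j}\atop{m}\right]_q, $$ $$ \left[{n+m+2}\atop{m+2}\right]_q=\frac12\sum_{\substack{j,k\ge 0\\ j+k\le n}}\left[{n+m-j-k}\atop{m}\right]_q\,q^{\,n-(j+k)}\left(q^{(m+2)j}+q^{(m+2)k}\right). $$
   Context: Here $q$ is a variable (e.g. $0<q<1$), $(q)_j:=(1-q)(1-q^2)\cdots(1-q^j)$ for $j\in\mathbf{N}$, $(q)_0:=1$, and $\left[{n}\atop{k}\right]_q:=\dfrac{(q)_n}{(q)_k\,(q)_{n-k}}$ denotes the $q$-binomial coefficient (Gaussian polynomial) for integers $0\le k\le n$. $\mathbf{N}_0=\{0,1,2,\dots\}$. *)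

theory Defs
  imports Complex_Main
begin

definition qpoch :: "real \<Rightarrow> nat \<Rightarrow> real" where
  "qpoch q j = (\<Prod>i=1..j. 1 - q ^ i)"

definition qbinom :: "real \<Rightarrow> nat \<Rightarrow> nat \<Rightarrow> real" where
  "qbinom q n k = qpoch q n / (qpoch q k * qpoch q (n - k))"

end

theory Submission
  imports Defs
begin

lemma qpoch_Suc: "qpoch q (Suc n) = qpoch q n * (1 - q ^ Suc n)"
  unfolding qpoch_def by (simp add: prod.nat_ivl_Suc')

lemma qpoch_nz: assumes "0 < q" "q < 1" shows "qpoch q n \<noteq> 0"
proof (induction n)
  case 0 then show ?case by (simp add: qpoch_def)
next
  case (Suc n)
  have "q ^ Suc n < 1" using assms by (meson power_less_one_iff zero_less_Suc less_imp_le)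
  then show ?case using Suc by (simp add: qpoch_Suc)
qed

lemma qbinom_nn: assumes "0 < q" "q < 1" shows "qbinom q n n = 1"
  using qpoch_nz[OF assms] by (simp add: qbinom_def qpoch_def)

lemma algA:
  fixes P A D x y :: real
  assumes "1 - x \<noteq> 0" "1 - y \<noteq> 0" "A \<noteq> 0" "D \<noteq> 0"
  shows "P * (1 - x * y) / (A * (1 - x) * (D * (1 - y))) = P / (A * (D * (1 - y))) + x * (P / (A * (1 - x) * D))"
proof -
  have n: "A * (1 - x) * (D * (1 - y)) \<noteq> 0" using assms by simp
  have "P / (A * (D * (1 - y))) + x * (P / (A * (1 - x) * D)) = (P * (1-x) + x * P * (1 - y)) / (A * (1 - x) * (D * (1 - y)))"
    using assms by (simp add: add_divide_distrib)
  also have "\<dots> = P * (1 - x * y) / (A * (1 - x) * (D * (1 - y)))" by (simp add: algebra_simps)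
  finally show ?thesis by simp
qed
lemma algB:
  fixes P A D x y :: real
  assumes "1 - x \<noteq> 0" "1 - y \<noteq> 0" "A \<noteq> 0" "D \<noteq> 0"
  shows "P * (1 - x * y) / (A * (1 - x) * (D * (1 - y))) = y * (P / (A * (D * (1 - y)))) + P / (A * (1 - x) * D)"
proof -
  have "y * (P / (A * (D * (1 - y)))) + P / (A * (1 - x) * D) = (y * P * (1-x) + P * (1 - y)) / (A * (1 - x) * (D * (1 - y)))"
    using assms by (simp add: add_divide_distrib)
  also have "\<dots> = P * (1 - x * y) / (A * (1 - x) * (D * (1 - y)))" by (simp add: algebra_simps)
  finally show ?thesis by simp
qed

lemma pascalA:
  assumes "0 < q" "q < 1" "k < n"
  shows "qbinom q (Suc n) (Suc k) = qbinom q n k + q ^ Suc k * qbinom q n (Suc k)"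
proof -
  obtain d where d: "n - k = Suc d" using assms(3) by (metis Suc_diff_Suc)
  have nd: "n - Suc k = d" using d by simp
  have sd: "Suc n - Suc k = Suc d" using d by simp
  have nk: "n = k + Suc d" using d assms(3) by simp
  note nz = qpoch_nz[OF assms(1,2)]
  have e: "q ^ Suc n = q ^ Suc k * q ^ Suc d" using nk by (simp add: power_add[symmetric])
  have x: "1 - q ^ Suc k \<noteq> 0" "1 - q ^ Suc d \<noteq> 0"
    using nz[of "Suc k"] nz[of "Suc d"] by (auto simp: qpoch_Suc)
  show ?thesis
    unfolding qbinom_def d nd sd qpoch_Suc e
    by (rule algA) (use x nz[of k] nz[of d] in auto)
qed

lemma pascalB:
  assumes "0 < q" "q < 1" "k < n"
  shows "qbinom q (Suc n) (Suc k) = q ^ (n - k) * qbinom q n k + qbinom q n (Suc k)"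
proof -
  obtain d where d: "n - k = Suc d" using assms(3) by (metis Suc_diff_Suc)
  have nd: "n - Suc k = d" using d by simp
  have sd: "Suc n - Suc k = Suc d" using d by simp
  have nk: "n = k + Suc d" using d assms(3) by simp
  note nz = qpoch_nz[OF assms(1,2)]
  have e: "q ^ Suc n = q ^ Suc k * q ^ Suc d" using nk by (simp add: power_add[symmetric])
  have x: "1 - q ^ Suc k \<noteq> 0" "1 - q ^ Suc d \<noteq> 0"
    using nz[of "Suc k"] nz[of "Suc d"] by (auto simp: qpoch_Suc)
  show ?thesis
    unfolding qbinom_def d nd sd qpoch_Suc e
    by (rule algB) (use x nz[of k] nz[of d] in auto)
qed

lemma ident1:
  assumes "0 < q" "q < 1"
  shows "qbinom q (n + m + 1) (m + 1) = (\<Sum>j=0..n. q ^ ((m + 1) * j) * qbinom q (n + m - j) m)"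
proof (induction n)
  case 0 then show ?case using qbinom_nn[OF assms] by simp
next
  case (Suc n)
  have "qbinom q (Suc n + m + 1) (m + 1) = qbinom q (n + m + 1) m + q ^ (m+1) * qbinom q (n + m + 1) (m + 1)"
    using pascalA[OF assms, of m "n+m+1"] by simp
  also have "\<dots> = q ^ ((m + 1) * 0) * qbinom q (Suc n + m - 0) m + (\<Sum>j=0..n. q ^ ((m + 1) * Suc j) * qbinom q (Suc n + m - Suc j) m)"
  proof -
    have "q ^ (m+1) * (\<Sum>j=0..n. q ^ ((m + 1) * j) * qbinom q (n + m - j) m) = (\<Sum>j=0..n. q ^ ((m + 1) * Suc j) * qbinom q (Suc n + m - Suc j) m)"
      unfolding sum_distrib_left
      by (rule sum.cong) (simp_all add: mult_Suc_right power_add)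
    then show ?thesis unfolding Suc by simp
  qed
  also have "\<dots> = (\<Sum>j=0..Suc n. q ^ ((m + 1) * j) * qbinom q (Suc n + m - j) m)"
    by (simp only: sum.atLeast0_atMost_Suc_shift comp_def)
  finally show ?case .
qed

lemma identC:
  assumes "0 < q" "q < 1"
  shows "qbinom q (N + m + 1) (m + 1) = (\<Sum>s=0..N. q ^ s * qbinom q (m + s) m)"
proof (induction N)
  case 0 then show ?case using qbinom_nn[OF assms] by simp
next
  case (Suc N)
  have "qbinom q (Suc N + m + 1) (m + 1) = q ^ Suc N * qbinom q (N + m + 1) m + qbinom q (N + m + 1) (m + 1)"
    using pascalB[OF assms, of m "N+m+1"] by simp
  then show ?case unfolding Suc by (simp add: add.commute)
qed

theorem theorem2p3:
  fixes q :: real and m n :: nat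
  assumes "0 < q" and "q < 1"
  shows "qbinom q (n + m + 1) (m + 1) = (\<Sum>j=0..n. q ^ ((m + 1) * j) * qbinom q (n + m - j) m) \<and>
         qbinom q (n + m + 2) (m + 2) =
           (1/2) * (\<Sum>(j, k) \<in> {(j, k). j + k \<le> n}.
              qbinom q (n + m - j - k) m * q ^ (n - (j + k)) * (q ^ ((m + 2) * j) + q ^ ((m + 2) * k)))"
proof
  show "qbinom q (n + m + 1) (m + 1) = (\<Sum>j=0..n. q ^ ((m + 1) * j) * qbinom q (n + m - j) m)"
    by (rule ident1[OF assms])
  define A where "A = {(j, k). j + k \<le> (n::nat)}"
  define F where "F = (\<lambda>(j::nat) (k::nat). qbinom q (n + m - j - k) m * q ^ (n - (j + k)))"
  define a where "a = (\<lambda>j::nat. q ^ ((m + 2) * j))"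
  have Aeq: "A = Sigma {0..n} (\<lambda>j. {0..n-j})" unfolding A_def by auto
  have finA: "finite A" unfolding Aeq by simp
  have Fsym: "F j k = F k j" for j k unfolding F_def by (simp add: add.commute diff_diff_left)
  have sw: "(\<Sum>(j, k)\<in>A. F j k * a k) = (\<Sum>(j, k)\<in>A. F j k * a j)"
    by (rule sum.reindex_bij_witness[where i="\<lambda>(j,k). (k,j)" and j="\<lambda>(j,k). (k,j)"])
       (auto simp: A_def Fsym)
  have "(\<Sum>(j, k)\<in>A. F j k * (a j + a k)) = (\<Sum>(j, k)\<in>A. F j k * a j) + (\<Sum>(j, k)\<in>A. F j k * a k)"
    by (simp add: distrib_left sum.distrib case_prod_beta)
  also have "\<dots> = 2 * (\<Sum>(j, k)\<in>A. F j k * a j)" using sw by simp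
  finally have half: "(1/2) * (\<Sum>(j, k)\<in>A. F j k * (a j + a k)) = (\<Sum>(j, k)\<in>A. F j k * a j)" by simp
  have inner: "(\<Sum>k=0..n-j. F j k) = qbinom q ((n - j) + m + 1) (m + 1)" if "j \<le> n" for j
  proof -
    have "(\<Sum>k=0..n-j. F j k) = (\<Sum>k=0..n-j. F j (n - j + 0 - k))"
      by (rule sum.atLeastAtMost_rev)
    also have "\<dots> = (\<Sum>s=0..n-j. q ^ s * qbinom q (m + s) m)"
      by (rule sum.cong) (use that in \<open>auto simp: F_def\<close>)
    finally show ?thesis using identC[OF assms] by simp
  qed
  have "(\<Sum>(j, k)\<in>A. F j k * a j) = (\<Sum>j=0..n. a j * (\<Sum>k=0..n-j. F j k))"
    unfolding Aeq by (simp add: sum.Sigma[symmetric] sum_distrib_left mult.commute)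
  also have "\<dots> = (\<Sum>j=0..n. q ^ ((m + 1 + 1) * j) * qbinom q (n + (m + 1) - j) (m + 1))"
    by (rule sum.cong) (auto simp: inner a_def Suc_diff_le)
  also have "\<dots> = qbinom q (n + m + 2) (m + 2)"
    using ident1[OF assms, of n "m+1"] by simp
  finally show "qbinom q (n + m + 2) (m + 2) =
           (1/2) * (\<Sum>(j, k) \<in> {(j, k). j + k \<le> n}.
              qbinom q (n + m - j - k) m * q ^ (n - (j + k)) * (q ^ ((m + 2) * j) + q ^ ((m + 2) * k)))"
    using half unfolding A_def F_def a_def by (simp add: mult.assoc)
qed

end
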